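(* Let $\mathcal A_{\theta(P)}$ be a set of tuples $(P_1,\dots,P_k)$ each satisfying $\mathcal H_{\theta(P)}$. Suppose that for each $(P_1,\dots,P_k)\in\mathcal A_{\theta(P)}$ the limits $R_T(x,P)$ and $H_T(x,P)$ are continuous and strictly increasing in $x$, and that the estimator $F_{T_n}$ satisfies $$\sup_{x\in\mathbb R}|F_{T_n}(x,\hat P)-H_{T_n}(x,P)|\to0,\qquad \sup_{x\in\mathbb R}|F_{T_n}(x,\hat P_\Pi)-R_{T_n}(x,\hat P)|\to0$$ in probability as $n\to\infty$. Then for each element of $\mathcal A_{\theta(P)}$, $$\sup_{x\in\mathbb R}|H_{F_n}(x,P)-U(x)|\to0,\qquad \sup_{x\in\mathbb R}|R_{F_n}(x,\hat P)-U(x)|\to0$$ in probability, where $U$ is the distribution function of the uniform distribution on $[0,1]$.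
   Context: Setting: $P_1,\dots,P_k$ are distributions on $\mathbb R^{d_P}$; for each $i$, $X_{i1},\dots,X_{in_i}$ are i.i.d. $P_i$, samples jointly independent, $n=\sum n_i$ with $n_i/n\to p_i\in(0,1)$. $Z$ is the $n\times d_P$ matrix stacking the samples (sample $i$ occupying the row index block $\mathcal I_i$). For a permutation $\pi$ of $\{1,\dots,n\}$, $Z_\pi$ is $Z$ with $j$th row replaced by its $\pi(j)$th row, $Z_{\pi i}$ the rows of $Z_\pi$ indexed by $\mathcal I_i$, $\hat P_{\pi i}$ the empirical distribution of $Z_{\pi i}$, $\hat P_\pi=(\hat P_{\pi1},\dots,\hat P_{\pi k})$, $\hat P=\hat P_{\mathrm{id}}$. $\Pi$ is uniform over all $n!$ permutations and independent of $Z$. For a $d$-dimensional functional $\theta$, $\mathcal H_{\theta(P)}$ is the hypothesis $\theta_\ell(P_1)=\dots=\theta_\ell(P_k)$ for all $\ell$. $T_n$ is a real-valued statistic (function of an $n\times d_P$ data matrix); $H_{T_n}(x,P)=\Pr\{T_n(Z)\le x\}$; its permutation distribution is $R_{T_n}(x,\hat P)=\frac1{n!}\sum_\pi1\{T_n(Z_\pi)\le x\}$. $H_T(x,P)$ is the limiting distribution function of $T_n(Z)$ and $R_T(x,P)$ is the probability limit of $R_{T_n}(x,\hat P)$ (at continuity points). $F_{T_n}(x,\hat P_\pi)$ is an estimate of a distribution function, computed from $Z_\pi$. $H_{F_n}(x,P)=\Pr[F_{T_n}\{T_n(Z),\hat P\}\le x]$ and $R_{F_n}(x,\hat P)=\frac1{n!}\sum_\pi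 1[F_{T_n}\{T_n(Z_\pi),\hat P_\pi\}\le x]=\Pr[F_{T_n}\{T_n(Z_\Pi),\hat P_\Pi\}\le x\mid Z]$. *)

theory Defs
  imports "HOL-Probability.Probability" "HOL-Combinatorics.Permutations"
begin

text \<open>Row index block of sample i at stage n (0-based): rows
  S_i, ..., S_i + n_i - 1 with S_i = n_0 + ... + n_(i-1).\<close>
definition block :: "(nat \<Rightarrow> nat \<Rightarrow> nat) \<Rightarrow> nat \<Rightarrow> nat \<Rightarrow> nat set" where
  "block ns n i = {(\<Sum>j<i. ns n j) ..< (\<Sum>j<i. ns n j) + ns n i}"

definition grp :: "nat \<Rightarrow> (nat \<Rightarrow> nat \<Rightarrow> nat) \<Rightarrow> nat \<Rightarrow> nat \<Rightarrow> nat" where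
  "grp k ns n j = (THE i. i < k \<and> j \<in> block ns n i)"

definition sample_law ::
  "(nat \<Rightarrow> (real^'d) measure) \<Rightarrow> nat \<Rightarrow> (nat \<Rightarrow> nat \<Rightarrow> nat) \<Rightarrow> nat \<Rightarrow> (nat \<Rightarrow> real^'d) measure" where
  "sample_law P k ns n = PiM {..<n} (\<lambda>j. P (grp k ns n j))"

definition emp :: "nat \<Rightarrow> (nat \<Rightarrow> nat \<Rightarrow> nat) \<Rightarrow> nat \<Rightarrow> (nat \<Rightarrow> real^'d) \<Rightarrow> nat \<Rightarrow> (real^'d) pmf" where
  "emp k ns n Z i = (if i < k then pmf_of_multiset (image_mset Z (mset_set (block ns n i)))
                     else return_pmf undefined)"

definition perms :: "nat \<Rightarrow> (nat \<Rightarrow> nat) set" where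
  "perms n = {\<pi>. \<pi> permutes {..<n}}"

definition perm_law :: "nat \<Rightarrow> (nat \<Rightarrow> nat) measure" where
  "perm_law n = measure_pmf (pmf_of_set (perms n))"

definition H_Tn where
  "H_Tn P k ns (T :: nat \<Rightarrow> (nat \<Rightarrow> real^'d) \<Rightarrow> real) n x =
     measure (sample_law P k ns n) {Z \<in> space (sample_law P k ns n). T n Z \<le> x}"

definition R_Tn :: "(nat \<Rightarrow> (nat \<Rightarrow> real^'d) \<Rightarrow> real) \<Rightarrow> nat \<Rightarrow> (nat \<Rightarrow> real^'d) \<Rightarrow> real \<Rightarrow> real" where
  "R_Tn T n Z x = (\<Sum>\<pi>\<in>perms n. if T n (Z \<circ> \<pi>) \<le> x then 1 else 0) / fact n"

definition H_Fn where
  "H_Fn P k ns (T :: nat \<Rightarrow> (nat \<Rightarrow> real^'d) \<Rightarrow> real)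
        (F :: nat \<Rightarrow> real \<Rightarrow> (nat \<Rightarrow> (real^'d) pmf) \<Rightarrow> real) n x =
     measure (sample_law P k ns n)
       {Z \<in> space (sample_law P k ns n). F n (T n Z) (emp k ns n Z) \<le> x}"

definition R_Fn where
  "R_Fn k ns (T :: nat \<Rightarrow> (nat \<Rightarrow> real^'d) \<Rightarrow> real)
        (F :: nat \<Rightarrow> real \<Rightarrow> (nat \<Rightarrow> (real^'d) pmf) \<Rightarrow> real) n Z x =
     (\<Sum>\<pi>\<in>perms n. if F n (T n (Z \<circ> \<pi>)) (emp k ns n (Z \<circ> \<pi>)) \<le> x then 1 else 0) / fact n"

definition unif_cdf :: "real \<Rightarrow> real" where
  "unif_cdf x = max 0 (min 1 x)"

text \<open>Convergence in probability of X n to the constant c (M n the law at stage n),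
  formulated with measurable sets of high probability (outer probability), so that
  it coincides with the usual notion whenever the events involved are measurable.\<close>
definition conv_prob :: "(nat \<Rightarrow> 'a measure) \<Rightarrow> (nat \<Rightarrow> 'a \<Rightarrow> real) \<Rightarrow> real \<Rightarrow> bool" where
  "conv_prob M X c \<longleftrightarrow> (\<forall>e>0. \<forall>\<delta>>0. eventually (\<lambda>n.
      \<exists>A\<in>sets (M n). measure (M n) A \<ge> 1 - \<delta> \<and> (\<forall>z\<in>A. \<bar>X n z - c\<bar> \<le> e)) sequentially)"

definition sup_conv_prob :: "(nat \<Rightarrow> 'a measure) \<Rightarrow> (nat \<Rightarrow> 'a \<Rightarrow> real \<Rightarrow> real) \<Rightarrow> bool" where
  "sup_conv_prob M G \<longleftrightarrow> (\<forall>e>0. \<forall>\<delta>>0. eventually (\<lambda>n.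
      \<exists>A\<in>sets (M n). measure (M n) A \<ge> 1 - \<delta> \<and> (\<forall>z\<in>A. \<forall>x. \<bar>G n z x\<bar> \<le> e)) sequentially)"

end

theory Submission
  imports Defs
begin

lemma cdf_bounds:
  fixes G :: "real \<Rightarrow> real"
  assumes sm: "strict_mono G" and l0: "(G \<longlongrightarrow> 0) at_bot" and l1: "(G \<longlongrightarrow> 1) at_top"
  shows "0 < G x \<and> G x < 1"
proof
  show "0 < G x"
  proof (rule ccontr)
    assume "\<not> 0 < G x"
    then have "G (x - 1) < 0" using sm[THEN strict_monoD, of "x-1" x] by simp
    then have "eventually (\<lambda>y. G (x - 1) < G y) at_bot" using order_tendstoD(1)[OF l0] by blast
    then obtain b where "\<And>y. y \<le> b \<Longrightarrow> G (x - 1) < G y" by (auto simp: eventually_at_bot_linorder)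
    then have "G (x - 1) < G (min b (x - 1))" by simp
    moreover have "G (min b (x - 1)) \<le> G (x - 1)" using strict_mono_mono[OF sm] by (simp add: monoD)
    ultimately show False by simp
  qed
  show "G x < 1"
  proof (rule ccontr)
    assume "\<not> G x < 1"
    then have "1 < G (x + 1)" using sm[THEN strict_monoD, of x "x+1"] by simp
    then have "eventually (\<lambda>y. G y < G (x + 1)) at_top" using order_tendstoD(2)[OF l1] by blast
    then obtain b where "\<And>y. y \<ge> b \<Longrightarrow> G y < G (x + 1)" by (auto simp: eventually_at_top_linorder)
    then have "G (max b (x + 1)) < G (x + 1)" by simp
    moreover have "G (x + 1) \<le> G (max b (x + 1))" using strict_mono_mono[OF sm] by (simp add: monoD)
    ultimately show False by simp
  qed
qed

lemma cdf_hit: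
  fixes G :: "real \<Rightarrow> real"
  assumes sm: "strict_mono G" and l0: "(G \<longlongrightarrow> 0) at_bot" and l1: "(G \<longlongrightarrow> 1) at_top"
    and ct: "continuous_on UNIV G" and c: "0 < c" "c < 1"
  shows "\<exists>y. G y = c"
proof -
  have "eventually (\<lambda>y. G y < c) at_bot" using order_tendstoD(2)[OF l0] c by blast
  then obtain a where a: "G a < c" by (auto simp: eventually_at_bot_linorder)
  have "eventually (\<lambda>y. c < G y) at_top" using order_tendstoD(1)[OF l1] c by blast
  then obtain b where b: "c < G b" by (auto simp: eventually_at_top_linorder)
  have ab: "a \<le> b"
  proof (rule ccontr)
    assume "\<not> a \<le> b" then have "G b < G a" using sm by (simp add: strict_mono_less)
    with a b show False by simp
  qed
  have "\<forall>x. a \<le> x \<and> x \<le> b \<longrightarrow> isCont G x" using ct by (simp add: continuous_on_eq_continuous_at)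
  from IVT[of G a c b, OF _ _ ab this] a b show ?thesis by auto
qed

lemma cdf_grid:
  fixes G :: "real \<Rightarrow> real"
  assumes sm: "strict_mono G" and l0: "(G \<longlongrightarrow> 0) at_bot" and l1: "(G \<longlongrightarrow> 1) at_top"
    and ct: "continuous_on UNIV G" and e: "0 < e"
  shows "\<exists>S. finite S \<and> (\<forall>x. (G x \<le> e \<or> (\<exists>s\<in>S. s \<le> x \<and> G x - G s \<le> e))
                         \<and> (1 - e \<le> G x \<or> (\<exists>s\<in>S. x \<le> s \<and> G s - G x \<le> e)))"
proof -
  define m :: nat where "m = nat (ceiling (1/e)) + 1"
  have m1: "1 \<le> m" by (simp add: m_def)
  have "1/e \<le> real (nat (ceiling (1/e)))" by linarith
  then have "1/e < real m" by (simp add: m_def)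
  then have me: "1 / real m < e" using e m1 by (simp add: field_simps)
  have hit: "\<exists>y. G y = real j / real m" if "1 \<le> j" "j < m" for j
    using cdf_hit[OF sm l0 l1 ct, of "real j / real m"] that by auto
  define s where "s j = (SOME y. G y = real j / real m)" for j
  have Gs: "G (s j) = real j / real m" if "1 \<le> j" "j < m" for j
    using someI_ex[OF hit[OF that]] by (simp add: s_def)
  have le_iff: "\<And>a b. G a \<le> G b \<longleftrightarrow> a \<le> b" using sm by (simp add: strict_mono_less_eq)
  show ?thesis
  proof (intro exI[of _ "s ` {1..<m}"] conjI allI)
    show "finite (s ` {1..<m})" by simp
    fix x
    define t where "t = G x"
    have t01: "0 < t" "t < 1" using cdf_bounds[OF sm l0 l1] t_def by auto
    define j where "j = nat (floor (t * real m))"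
    have j1: "real j \<le> t * real m" using t01 m1 by (simp add: j_def)
    have j2: "t * real m < real j + 1" using t01 m1 by (simp add: j_def)
    have jm: "j < m"
    proof -
      have "t * real m < real m" using t01 m1 by simp
      then show ?thesis using j1 by linarith
    qed
    show "G x \<le> e \<or> (\<exists>s'\<in>s ` {1..<m}. s' \<le> x \<and> G x - G s' \<le> e)"
    proof (cases "j = 0")
      case True
      then have "t < 1 / real m" using j2 m1 by (simp add: field_simps)
      then show ?thesis using me t_def by simp
    next
      case False
      have G: "G (s j) = real j / real m" using Gs[of j] False jm by simp
      have "real j / real m \<le> t" using j1 m1 by (simp add: field_simps)
      then have "s j \<le> x" using G le_iff[of "s j" x] t_def by simp
      moreover have "t - real j / real m \<le> e"
        using j2 m1 me by (simp add: field_simps)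
      ultimately show ?thesis using False jm G t_def by (intro disjI2 bexI[of _ "s j"]) auto
    qed
    show "1 - e \<le> G x \<or> (\<exists>s'\<in>s ` {1..<m}. x \<le> s' \<and> G s' - G x \<le> e)"
    proof (cases "j + 1 = m")
      case True
      then have "real m - 1 \<le> t * real m" using j1 by simp
      then have "1 - 1 / real m \<le> t" using m1 by (simp add: field_simps)
      then show ?thesis using me t_def by simp
    next
      case False
      have G: "G (s (j+1)) = (real j + 1) / real m" using Gs[of "j+1"] False jm by simp
      have "t \<le> (real j + 1) / real m" using j2 m1 by (simp add: field_simps)
      then have "x \<le> s (j+1)" using G le_iff[of x "s (j+1)"] t_def by simp
      moreover have "(real j + 1) / real m - t \<le> e"
        using j1 m1 me by (simp add: field_simps)
      ultimately show ?thesis using False jm G t_def by (intro disjI2 bexI[of _ "s (j+1)"]) auto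
    qed
  qed
qed

lemma grid_apply:
  fixes G g :: "real \<Rightarrow> real"
  assumes grid: "\<forall>x. (G x \<le> e \<or> (\<exists>s\<in>S. s \<le> x \<and> G x - G s \<le> e))
                         \<and> (1 - e \<le> G x \<or> (\<exists>s\<in>S. x \<le> s \<and> G s - G x \<le> e))"
    and mono: "\<And>a b. a \<le> b \<Longrightarrow> g a \<le> g b" and g01: "\<And>x. 0 \<le> g x \<and> g x \<le> 1"
    and G01: "\<And>x. 0 \<le> G x \<and> G x \<le> 1"
    and close: "\<forall>s\<in>S. \<bar>g s - G s\<bar> \<le> e"
  shows "\<bar>g x - G x\<bar> \<le> 2 * e"
proof -
  have "G x - 2 * e \<le> g x"
    using grid[rule_format, of x] g01[of x] close mono by (force simp: abs_le_iff)
  moreover have "g x \<le> G x + 2 * e"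
    using grid[rule_format, of x] g01[of x] close mono by (force simp: abs_le_iff)
  ultimately show ?thesis by (simp add: abs_le_iff)
qed

lemma transfer:
  fixes G :: "real \<Rightarrow> real" and h :: "real set \<Rightarrow> real"
  assumes sm: "strict_mono G" and l0: "(G \<longlongrightarrow> 0) at_bot" and l1: "(G \<longlongrightarrow> 1) at_top"
    and ct: "continuous_on UNIV G" and d: "0 \<le> d"
    and h0: "h {} = 0" and h1: "h UNIV = 1" and close: "\<And>y. \<bar>h {v. v \<le> y} - G y\<bar> \<le> d"
  shows "\<bar>h {v. G v \<le> c} - unif_cdf c\<bar> \<le> d"
proof -
  have b: "\<And>v. 0 < G v \<and> G v < 1" using cdf_bounds[OF sm l0 l1] by blast
  consider "c \<le> 0" | "1 \<le> c" | "0 < c \<and> c < 1" by linarith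
  then show ?thesis
  proof cases
    case 1
    then have "{v. G v \<le> c} = {}" using b by (smt (verit) Collect_empty_eq)
    then show ?thesis using 1 h0 d by (simp add: unif_cdf_def)
  next
    case 2
    then have "{v. G v \<le> c} = UNIV" using b by (smt (verit) UNIV_eq_I mem_Collect_eq)
    then show ?thesis using 2 h1 d by (simp add: unif_cdf_def)
  next
    case 3
    then obtain y where y: "G y = c" using cdf_hit[OF sm l0 l1 ct] by blast
    have "{v. G v \<le> c} = {v. v \<le> y}" using y sm by (auto simp: strict_mono_less_eq)
    then show ?thesis using close[of y] y 3 by (simp add: unif_cdf_def)
  qed
qed

lemma sum_ind_card: "finite A \<Longrightarrow> (\<Sum>\<pi>\<in>A. if P \<pi> then (1::real) else 0) = real (card {\<pi>\<in>A. P \<pi>})"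
  by (simp add: sum.If_cases Int_def)

lemma unif_lip: "0 \<le> a \<Longrightarrow> unif_cdf (x + a) \<le> unif_cdf x + a" "0 \<le> a \<Longrightarrow> unif_cdf x - a \<le> unif_cdf (x - a)"
  by (auto simp: unif_cdf_def max_def min_def)

lemma part1:
  fixes M :: "nat \<Rightarrow> 'z measure" and T :: "nat \<Rightarrow> 'z \<Rightarrow> real"
    and \<Phi> :: "nat \<Rightarrow> real \<Rightarrow> 'z \<Rightarrow> real" and HT :: "real \<Rightarrow> real"
  assumes PS: "\<And>n. prob_space (M n)"
    and T_meas: "\<And>n. T n \<in> borel_measurable (M n)"
    and \<Phi>_meas: "\<And>n x. {Z \<in> space (M n). \<Phi> n (T n Z) Z \<le> x} \<in> sets (M n)"
    and HT_lim: "\<And>x. (\<lambda>n. measure (M n) {Z \<in> space (M n). T n Z \<le> x}) \<longlonglongrightarrow> HT x"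
    and l0: "(HT \<longlongrightarrow> 0) at_bot" and l1: "(HT \<longlongrightarrow> 1) at_top"
    and ct: "continuous_on UNIV HT" and sm: "strict_mono HT"
    and F_H: "sup_conv_prob M (\<lambda>n Z x. \<Phi> n x Z - measure (M n) {Z \<in> space (M n). T n Z \<le> x})"
  shows "\<forall>e>0. eventually (\<lambda>n. \<forall>x. \<bar>measure (M n) {Z \<in> space (M n). \<Phi> n (T n Z) Z \<le> x} - unif_cdf x\<bar> \<le> e) sequentially"
proof (intro allI impI)
  fix e :: real assume e: "0 < e"
  define e' where "e' = e / 6"
  have e': "0 < e'" using e by (simp add: e'_def)
  define H where "H n y = measure (M n) {Z \<in> space (M n). T n Z \<le> y}" for n y
  obtain S where Sfin: "finite S" and grid: "\<forall>x. (HT x \<le> e' \<or> (\<exists>s\<in>S. s \<le> x \<and> HT x - HT s \<le> e'))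
                         \<and> (1 - e' \<le> HT x \<or> (\<exists>s\<in>S. x \<le> s \<and> HT s - HT x \<le> e'))"
    using cdf_grid[OF sm l0 l1 ct e'] by blast
  have HT01: "\<And>x. 0 \<le> HT x \<and> HT x \<le> 1" using cdf_bounds[OF sm l0 l1] by (simp add: less_imp_le)
  have ev1: "eventually (\<lambda>n. \<forall>s\<in>S. \<bar>H n s - HT s\<bar> \<le> e') sequentially"
  proof (rule eventually_ball_finite[OF Sfin], intro ballI)
    fix s
    have "eventually (\<lambda>n. dist (H n s) (HT s) < e') sequentially"
      using tendstoD[OF HT_lim[of s] e'] by (simp add: H_def)
    then show "eventually (\<lambda>n. \<bar>H n s - HT s\<bar> \<le> e') sequentially"
      by eventually_elim (simp add: dist_real_def)
  qed
  have ev2: "eventually (\<lambda>n. \<exists>A\<in>sets (M n). measure (M n) A \<ge> 1 - e' \<and>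
      (\<forall>z\<in>A. \<forall>x. \<bar>\<Phi> n x z - H n x\<bar> \<le> e')) sequentially"
    using F_H e' unfolding sup_conv_prob_def H_def by blast
  show "eventually (\<lambda>n. \<forall>x. \<bar>measure (M n) {Z \<in> space (M n). \<Phi> n (T n Z) Z \<le> x} - unif_cdf x\<bar> \<le> e) sequentially"
    using ev1 ev2
  proof eventually_elim
    case (elim n)
    interpret prob_space "M n" by (rule PS)
    note [measurable] = T_meas[of n]
    have HTm[measurable]: "HT \<in> borel_measurable borel" by (rule borel_measurable_continuous_onI[OF ct])
    obtain A where A: "A \<in> sets (M n)" "measure (M n) A \<ge> 1 - e'"
       "\<And>z x. z \<in> A \<Longrightarrow> \<bar>\<Phi> n x z - H n x\<bar> \<le> e'" using elim(2) by blast
    have unifH: "\<bar>H n y - HT y\<bar> \<le> 2 * e'" for y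
    proof (rule grid_apply[OF grid _ _ HT01])
      show "H n a \<le> H n b" if "a \<le> b" for a b
        unfolding H_def using that by (intro finite_measure_mono) auto
      show "0 \<le> H n x \<and> H n x \<le> 1" for x by (simp add: H_def)
      show "\<forall>s\<in>S. \<bar>H n s - HT s\<bar> \<le> e'" using elim(1) .
    qed
    have tr: "\<bar>measure (M n) {Z \<in> space (M n). HT (T n Z) \<le> c} - unif_cdf c\<bar> \<le> 2 * e'" for c
      using transfer[OF sm l0 l1 ct, of "2*e'" "\<lambda>X. measure (M n) {Z \<in> space (M n). T n Z \<in> X}" c] e' unifH
      by (simp add: H_def prob_space)
    have close: "\<bar>\<Phi> n (T n z) z - HT (T n z)\<bar> \<le> 3 * e'" if "z \<in> A" for z
      using A(3)[OF that, of "T n z"] unifH[of "T n z"] by simp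
    have Ac: "measure (M n) (space (M n) - A) \<le> e'" using prob_compl[OF A(1)] A(2) by simp
    show ?case
    proof
      fix x
      let ?X = "{Z \<in> space (M n). \<Phi> n (T n Z) Z \<le> x}"
      have "?X \<subseteq> (space (M n) - A) \<union> {Z \<in> space (M n). HT (T n Z) \<le> x + 3 * e'}"
        using close by (force simp: abs_le_iff)
      then have "measure (M n) ?X \<le> measure (M n) ((space (M n) - A) \<union> {Z \<in> space (M n). HT (T n Z) \<le> x + 3 * e'})"
        by (intro finite_measure_mono) (use A(1) in auto)
      also have "\<dots> \<le> measure (M n) (space (M n) - A) + measure (M n) {Z \<in> space (M n). HT (T n Z) \<le> x + 3 * e'}"
        by (intro measure_Un_le) (use A(1) in auto)
      also have "\<dots> \<le> e' + (unif_cdf (x + 3 * e') + 2 * e')" using Ac tr[of "x + 3*e'"] by (simp add: abs_le_iff)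
      also have "\<dots> \<le> unif_cdf x + e" using unif_lip(1)[of "3*e'" x] e' by (simp add: e'_def)
      finally have up: "measure (M n) ?X \<le> unif_cdf x + e" .
      have "{Z \<in> space (M n). HT (T n Z) \<le> x - 3 * e'} \<subseteq> ?X \<union> (space (M n) - A)"
        using close by (force simp: abs_le_iff)
      then have "measure (M n) {Z \<in> space (M n). HT (T n Z) \<le> x - 3 * e'} \<le> measure (M n) (?X \<union> (space (M n) - A))"
        by (intro finite_measure_mono) (use A(1) \<Phi>_meas in auto)
      also have "\<dots> \<le> measure (M n) ?X + measure (M n) (space (M n) - A)"
        by (intro measure_Un_le) (use A(1) \<Phi>_meas in auto)
      finally have "unif_cdf (x - 3 * e') - 2 * e' \<le> measure (M n) ?X + e'"
        using Ac tr[of "x - 3*e'"] by (simp add: abs_le_iff)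
      then have lo: "unif_cdf x - e \<le> measure (M n) ?X"
        using unif_lip(2)[of "3*e'" x] e' by (simp add: e'_def)
      from up lo show "\<bar>measure (M n) ?X - unif_cdf x\<bar> \<le> e" by (simp add: abs_le_iff)
    qed
  qed
qed

lemma meas_int:
  assumes "prob_space M" "X \<in> sets M" "Y \<in> sets M"
  shows "measure M (X \<inter> Y) \<ge> measure M X + measure M Y - 1"
proof -
  interpret prob_space M by fact
  have "measure M (X \<union> Y) = measure M X + measure M Y - measure M (X \<inter> Y)"
    using assms by (intro measure_Un3) (auto simp: fmeasurable_eq_sets)
  moreover have "measure M (X \<union> Y) \<le> 1" by simp
  ultimately show ?thesis by simp
qed

lemma meas_Inter:
  assumes "prob_space M" "finite S" "\<And>s. s \<in> S \<Longrightarrow> A s \<in> sets M \<and> measure M (A s) \<ge> 1 - d"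
  shows "space M \<inter> \<Inter>(A ` S) \<in> sets M \<and> measure M (space M \<inter> \<Inter>(A ` S)) \<ge> 1 - real (card S) * d"
  using assms(2,3)
proof (induction S rule: finite_induct)
  case empty
  then show ?case using assms(1) by (simp add: prob_space.prob_space)
next
  case (insert a S)
  have eq: "space M \<inter> \<Inter>(A ` insert a S) = A a \<inter> (space M \<inter> \<Inter>(A ` S))" by auto
  have IH: "space M \<inter> \<Inter>(A ` S) \<in> sets M \<and> measure M (space M \<inter> \<Inter>(A ` S)) \<ge> 1 - real (card S) * d"
    using insert by auto
  have a: "A a \<in> sets M" "measure M (A a) \<ge> 1 - d" using insert by auto
  have "measure M (A a \<inter> (space M \<inter> \<Inter>(A ` S))) \<ge> measure M (A a) + measure M (space M \<inter> \<Inter>(A ` S)) - 1"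
    using meas_int[OF assms(1) a(1)] IH by blast
  then show ?case using eq IH a insert(1,2) by (auto simp: algebra_simps)
qed

lemma fubini_markov:
  fixes M :: "'z measure" and PP :: "'p set"
  assumes PS: "prob_space M" and fin: "finite PP" and ne: "PP \<noteq> {}"
    and C: "C \<in> sets (M \<Otimes>\<^sub>M measure_pmf (pmf_of_set PP))"
    and Cm: "measure (M \<Otimes>\<^sub>M measure_pmf (pmf_of_set PP)) C \<ge> 1 - d"
    and eta: "0 < \<eta>" and d0: "0 \<le> d"
  shows "\<exists>B\<in>sets M. measure M B \<ge> 1 - d / \<eta> \<and>
           (\<forall>Z\<in>B. real (card {\<pi>\<in>PP. (Z, \<pi>) \<notin> C}) \<le> \<eta> * real (card PP))"
proof -
  let ?Q = "measure_pmf (pmf_of_set PP)"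
  let ?N = "M \<Otimes>\<^sub>M ?Q"
  interpret M: prob_space M by fact
  interpret Q: prob_space ?Q by (rule prob_space_measure_pmf)
  interpret pair_prob_space M ?Q by unfold_locales
  have Qs: "sigma_finite_measure ?Q" by (rule prob_space_imp_sigma_finite) (rule prob_space_measure_pmf)
  define D where "D = space ?N - C"
  have D: "D \<in> sets ?N" using C by (simp add: D_def)
  define u where "u Z = emeasure ?Q (Pair Z -` D)" for Z
  have um[measurable]: "u \<in> borel_measurable M"
    unfolding u_def by (rule sigma_finite_measure.measurable_emeasure_Pair[OF Qs D])
  have "emeasure ?N D = (\<integral>\<^sup>+Z. u Z \<partial>M)"
    unfolding u_def by (rule sigma_finite_measure.emeasure_pair_measure_alt[OF Qs D])
  moreover have "emeasure ?N D = ennreal (1 - measure ?N C)"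
    using P.prob_compl[OF C] by (simp add: D_def P.emeasure_eq_measure)
  ultimately have intu: "(\<integral>\<^sup>+Z. u Z \<partial>M) \<le> ennreal d"
    using Cm by (metis ennreal_leI le_diff_eq add.commute diff_le_eq)
  define Bad where "Bad = {Z\<in>space M. 1 \<le> ennreal (1/\<eta>) * u Z}"
  have Badm: "Bad \<in> sets M" unfolding Bad_def by measurable
  have "emeasure M Bad \<le> ennreal (1/\<eta>) * (\<integral>\<^sup>+ Z. u Z * indicator (space M) Z \<partial>M)"
    unfolding Bad_def by (rule nn_integral_Markov_inequality) auto
  also have "(\<integral>\<^sup>+ Z. u Z * indicator (space M) Z \<partial>M) = (\<integral>\<^sup>+Z. u Z \<partial>M)"
    by (intro nn_integral_cong) (simp add: indicator_def)
  also have "ennreal (1/\<eta>) * (\<integral>\<^sup>+Z. u Z \<partial>M) \<le> ennreal (1/\<eta>) * ennreal d"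
    by (intro mult_left_mono intu) simp
  finally have "emeasure M Bad \<le> ennreal (1/\<eta>) * ennreal d" .
  then have "measure M Bad \<le> d / \<eta>"
    using eta d0 by (simp add: M.emeasure_eq_measure ennreal_mult[symmetric] divide_inverse mult.commute)
  show ?thesis
  proof (intro bexI[of _ "space M - Bad"] conjI ballI)
    show "space M - Bad \<in> sets M" using Badm by auto
    show "measure M (space M - Bad) \<ge> 1 - d / \<eta>"
      using M.prob_compl[OF Badm] \<open>measure M Bad \<le> d / \<eta>\<close> by simp
    fix Z assume Z: "Z \<in> space M - Bad"
    have "Pair Z -` D = {\<pi>. (Z, \<pi>) \<notin> C}" using Z by (auto simp: D_def space_pair_measure)
    then have uZ: "u Z = ennreal (real (card (PP \<inter> {\<pi>. (Z, \<pi>) \<notin> C})) / real (card PP))"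
      unfolding u_def using fin ne by (simp add: measure_pmf.emeasure_eq_measure measure_pmf_of_set)
    have "\<not> 1 \<le> ennreal (1/\<eta>) * u Z" using Z by (auto simp: Bad_def)
    then have "real (card (PP \<inter> {\<pi>. (Z, \<pi>) \<notin> C})) / real (card PP) / \<eta> < 1"
      using eta by (simp add: uZ ennreal_mult''[symmetric] not_le ennreal_less_iff divide_inverse mult.commute)
    then show "real (card {\<pi>\<in>PP. (Z, \<pi>) \<notin> C}) \<le> \<eta> * real (card PP)"
      using eta fin ne by (simp add: field_simps Int_def card_gt_0_iff)
  qed
qed

lemma part2:
  fixes M :: "nat \<Rightarrow> 'z measure" and PP :: "nat \<Rightarrow> 'p set"
    and W :: "nat \<Rightarrow> 'z \<Rightarrow> 'p \<Rightarrow> real" and G :: "nat \<Rightarrow> 'z \<Rightarrow> 'p \<Rightarrow> real \<Rightarrow> real"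
    and R RF :: "nat \<Rightarrow> 'z \<Rightarrow> real \<Rightarrow> real" and RT :: "real \<Rightarrow> real"
  assumes PS: "\<And>n. prob_space (M n)"
    and fin: "\<And>n. finite (PP n)" and ne: "\<And>n. PP n \<noteq> {}"
    and R_eq: "\<And>n Z y. R n Z y = real (card {\<pi>\<in>PP n. W n Z \<pi> \<le> y}) / real (card (PP n))"
    and RF_eq: "\<And>n Z x. RF n Z x = real (card {\<pi>\<in>PP n. G n Z \<pi> (W n Z \<pi>) \<le> x}) / real (card (PP n))"
    and RT_lim: "\<And>x. conv_prob M (\<lambda>n Z. R n Z x) (RT x)"
    and l0: "(RT \<longlongrightarrow> 0) at_bot" and l1: "(RT \<longlongrightarrow> 1) at_top"
    and ct: "continuous_on UNIV RT" and sm: "strict_mono RT"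
    and F_R: "sup_conv_prob (\<lambda>n. M n \<Otimes>\<^sub>M measure_pmf (pmf_of_set (PP n)))
                (\<lambda>n (Z, \<pi>) x. G n Z \<pi> x - R n Z x)"
  shows "sup_conv_prob M (\<lambda>n Z x. RF n Z x - unif_cdf x)"
  unfolding sup_conv_prob_def
proof (intro allI impI)
  fix e \<delta> :: real assume e: "0 < e" and \<delta>: "0 < \<delta>"
  define e' where "e' = e / 6"
  have e': "0 < e'" using e by (simp add: e'_def)
  obtain S where Sfin: "finite S" and grid: "\<forall>x. (RT x \<le> e' \<or> (\<exists>s\<in>S. s \<le> x \<and> RT x - RT s \<le> e'))
                         \<and> (1 - e' \<le> RT x \<or> (\<exists>s\<in>S. x \<le> s \<and> RT s - RT x \<le> e'))"
    using cdf_grid[OF sm l0 l1 ct e'] by blast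
  have RT01: "\<And>x. 0 \<le> RT x \<and> RT x \<le> 1" using cdf_bounds[OF sm l0 l1] by (simp add: less_imp_le)
  define d1 where "d1 = \<delta> / (2 * (real (card S) + 1))"
  have d1: "0 < d1" using \<delta> by (simp add: d1_def)
  have d1S: "real (card S) * d1 \<le> \<delta> / 2"
    using \<delta> by (simp add: d1_def field_simps)
  define \<delta>2 where "\<delta>2 = \<delta> * e' / 2"
  have \<delta>2: "0 < \<delta>2" using \<delta> e' by (simp add: \<delta>2_def)
  have ev1: "eventually (\<lambda>n. \<forall>s\<in>S. \<exists>A\<in>sets (M n). measure (M n) A \<ge> 1 - d1 \<and>
               (\<forall>Z\<in>A. \<bar>R n Z s - RT s\<bar> \<le> e')) sequentially"
    using Sfin by (rule eventually_ball_finite) (use RT_lim e' d1 in \<open>auto simp: conv_prob_def\<close>)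
  have ev2: "eventually (\<lambda>n. \<exists>C\<in>sets (M n \<Otimes>\<^sub>M measure_pmf (pmf_of_set (PP n))).
       measure (M n \<Otimes>\<^sub>M measure_pmf (pmf_of_set (PP n))) C \<ge> 1 - \<delta>2 \<and>
       (\<forall>z\<in>C. \<forall>x. \<bar>(case z of (Z, \<pi>) \<Rightarrow> \<lambda>x. G n Z \<pi> x - R n Z x) x\<bar> \<le> e')) sequentially"
    using F_R e' \<delta>2 unfolding sup_conv_prob_def by blast
  show "eventually (\<lambda>n. \<exists>B\<in>sets (M n). measure (M n) B \<ge> 1 - \<delta> \<and>
          (\<forall>z\<in>B. \<forall>x. \<bar>RF n z x - unif_cdf x\<bar> \<le> e)) sequentially"
    using ev1 ev2
  proof eventually_elim
    case (elim n)
    interpret prob_space "M n" by (rule PS)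
    have K: "0 < real (card (PP n))" using fin[of n] ne[of n] by (simp add: card_gt_0_iff)
    obtain A where A: "\<And>s. s \<in> S \<Longrightarrow> A s \<in> sets (M n) \<and> measure (M n) (A s) \<ge> 1 - d1 \<and>
               (\<forall>Z\<in>A s. \<bar>R n Z s - RT s\<bar> \<le> e')"
    proof -
      have "\<forall>s\<in>S. \<exists>A. A \<in> sets (M n) \<and> measure (M n) A \<ge> 1 - d1 \<and>
               (\<forall>Z\<in>A. \<bar>R n Z s - RT s\<bar> \<le> e')" using elim(1) by blast
      from bchoice[OF this] show ?thesis using that by blast
    qed
    define A1 where "A1 = space (M n) \<inter> \<Inter>(A ` S)"
    have A1: "A1 \<in> sets (M n)" "measure (M n) A1 \<ge> 1 - \<delta> / 2"
    proof -
      have "space (M n) \<inter> \<Inter>(A ` S) \<in> sets (M n) \<and> measure (M n) (space (M n) \<inter> \<Inter>(A ` S)) \<ge> 1 - real (card S) * d1"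
        using meas_Inter[OF PS[of n] Sfin, where A=A and d=d1] A by blast
      then show "A1 \<in> sets (M n)" "measure (M n) A1 \<ge> 1 - \<delta> / 2" using d1S unfolding A1_def by auto
    qed
    obtain C where C: "C \<in> sets (M n \<Otimes>\<^sub>M measure_pmf (pmf_of_set (PP n)))"
       "measure (M n \<Otimes>\<^sub>M measure_pmf (pmf_of_set (PP n))) C \<ge> 1 - \<delta>2"
       "\<And>Z \<pi> x. (Z, \<pi>) \<in> C \<Longrightarrow> \<bar>G n Z \<pi> x - R n Z x\<bar> \<le> e'"
      using elim(2) by fastforce
    obtain B2 where B2: "B2 \<in> sets (M n)" "measure (M n) B2 \<ge> 1 - \<delta>2 / e'"
      "\<And>Z. Z \<in> B2 \<Longrightarrow> real (card {\<pi>\<in>PP n. (Z, \<pi>) \<notin> C}) \<le> e' * real (card (PP n))"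
      using fubini_markov[OF PS[of n] fin[of n] ne[of n] C(1,2) e'] \<delta>2 by auto
    have "\<delta>2 / e' = \<delta> / 2" using e' by (simp add: \<delta>2_def)
    then have mB: "measure (M n) (A1 \<inter> B2) \<ge> 1 - \<delta>"
      using meas_int[OF PS[of n] A1(1) B2(1)] A1(2) B2(2) by linarith
    show ?case
    proof (intro bexI[of _ "A1 \<inter> B2"] conjI ballI allI)
      show "A1 \<inter> B2 \<in> sets (M n)" using A1(1) B2(1) by auto
      show "1 - \<delta> \<le> measure (M n) (A1 \<inter> B2)" by (rule mB)
      fix Z x assume Z: "Z \<in> A1 \<inter> B2"
      let ?K = "real (card (PP n))"
      have unifR: "\<bar>R n Z y - RT y\<bar> \<le> 2 * e'" for y
      proof (rule grid_apply[OF grid _ _ RT01])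
        show "R n Z a \<le> R n Z b" if "a \<le> b" for a b
          unfolding R_eq using that K fin[of n]
          by (intro divide_right_mono) (auto intro!: card_mono)
        show "0 \<le> R n Z y \<and> R n Z y \<le> 1" for y
          unfolding R_eq using K fin[of n] by (auto intro!: card_mono)
        show "\<forall>s\<in>S. \<bar>R n Z s - RT s\<bar> \<le> e'" using A Z unfolding A1_def by blast
      qed
      have tr: "\<bar>real (card {\<pi>\<in>PP n. W n Z \<pi> \<in> {v. RT v \<le> c}}) / ?K - unif_cdf c\<bar> \<le> 2 * e'" for c
        by (rule transfer[OF sm l0 l1 ct, of "2*e'" "\<lambda>X. real (card {\<pi>\<in>PP n. W n Z \<pi> \<in> X}) / ?K"])
           (use e' K unifR in \<open>auto simp: R_eq\<close>)
      define Bd where "Bd = {\<pi>\<in>PP n. (Z, \<pi>) \<notin> C}"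
      have Bd: "real (card Bd) \<le> e' * ?K" using B2(3) Z Bd_def by auto
      have close: "\<bar>G n Z \<pi> (W n Z \<pi>) - RT (W n Z \<pi>)\<bar> \<le> 3 * e'" if "\<pi> \<in> PP n" "\<pi> \<notin> Bd" for \<pi>
        using C(3)[of Z \<pi> "W n Z \<pi>"] unifR[of "W n Z \<pi>"] that by (auto simp: Bd_def)
      let ?X = "{\<pi>\<in>PP n. G n Z \<pi> (W n Z \<pi>) \<le> x}"
      let ?Yu = "{\<pi>\<in>PP n. W n Z \<pi> \<in> {v. RT v \<le> x + 3 * e'}}"
      let ?Yl = "{\<pi>\<in>PP n. W n Z \<pi> \<in> {v. RT v \<le> x - 3 * e'}}"
      have "?X \<subseteq> Bd \<union> ?Yu" using close by (force simp: abs_le_iff Bd_def)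
      then have "card ?X \<le> card (Bd \<union> ?Yu)" using fin[of n] by (intro card_mono) (auto simp: Bd_def)
      also have "\<dots> \<le> card Bd + card ?Yu" by (rule card_Un_le)
      finally have "real (card ?X) \<le> real (card Bd) + real (card ?Yu)" by linarith
      then have "real (card ?X) / ?K \<le> real (card Bd) / ?K + real (card ?Yu) / ?K"
        using K by (simp add: add_divide_distrib[symmetric] divide_right_mono)
      also have "\<dots> \<le> e' + (unif_cdf (x + 3 * e') + 2 * e')"
        using Bd K tr[of "x + 3 * e'"] by (intro add_mono) (auto simp: abs_le_iff field_simps)
      also have "\<dots> \<le> unif_cdf x + e" using unif_lip(1)[of "3*e'" x] e' by (simp add: e'_def)
      finally have up: "RF n Z x \<le> unif_cdf x + e" by (simp add: RF_eq)
      have "?Yl \<subseteq> ?X \<union> Bd" using close by (force simp: abs_le_iff Bd_def)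
      then have "card ?Yl \<le> card (?X \<union> Bd)" using fin[of n] by (intro card_mono) (auto simp: Bd_def)
      also have "\<dots> \<le> card ?X + card Bd" by (rule card_Un_le)
      finally have "real (card ?Yl) \<le> real (card ?X) + real (card Bd)" by linarith
      then have "real (card ?Yl) / ?K \<le> real (card ?X) / ?K + real (card Bd) / ?K"
        using K by (simp add: add_divide_distrib[symmetric] divide_right_mono)
      also have "\<dots> \<le> real (card ?X) / ?K + e'"
        using Bd K by (auto simp: field_simps)
      finally have "unif_cdf (x - 3 * e') - 2 * e' \<le> real (card ?X) / ?K + e'"
        using tr[of "x - 3 * e'"] by (simp add: abs_le_iff)
      then have lo: "unif_cdf x - e \<le> RF n Z x"
        using unif_lip(2)[of "3*e'" x] e' by (simp add: e'_def RF_eq)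
      from up lo show "\<bar>RF n Z x - unif_cdf x\<bar> \<le> e" by (simp add: abs_le_iff)
    qed
  qed
qed

lemma sum_mono_nat: "a \<le> b \<Longrightarrow> (\<Sum>j<a. f j) \<le> (\<Sum>j<(b::nat). (f j :: nat))"
  by (rule sum_mono2) auto

lemma grp_ok:
  assumes sizes: "(\<Sum>i<k. ns n i) = n" and j: "j < n"
  shows "grp k ns n j < k"
proof -
  define S where "S i = (\<Sum>l<i. ns n l)" for i
  have Ssuc: "S (Suc i) = S i + ns n i" for i by (simp add: S_def)
  have Smono: "a \<le> b \<Longrightarrow> S a \<le> S b" for a b unfolding S_def by (rule sum_mono_nat)
  have k0: "0 < k" using sizes j by (cases k) auto
  have ex: "j < S (Suc (k - 1))" using k0 sizes j by (simp add: S_def)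
  define i0 where "i0 = (LEAST i. j < S (Suc i))"
  have i0: "j < S (Suc i0)" unfolding i0_def by (rule LeastI[where P="\<lambda>i. j < S (Suc i)", OF ex])
  have i0k: "i0 \<le> k - 1" unfolding i0_def by (rule Least_le[where P="\<lambda>i. j < S (Suc i)", OF ex])
  have i0lo: "S i0 \<le> j"
  proof (cases i0)
    case 0 then show ?thesis by (simp add: S_def)
  next
    case (Suc i')
    have "i' < i0" using Suc by simp
    then have "\<not> j < S (Suc i')" unfolding i0_def by (rule not_less_Least)
    then show ?thesis using Suc by simp
  qed
  have mem1: "i0 < k" using i0k k0 by linarith
  have "j < S i0 + ns n i0" using i0 Ssuc[of i0] by simp
  then have mem2: "j \<in> block ns n i0" using i0lo unfolding block_def S_def by simp
  have mem: "i0 < k \<and> j \<in> block ns n i0" using mem1 mem2 by blast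
  have uniq: "i = i0" if "i < k \<and> j \<in> block ns n i" for i
  proof (rule ccontr)
    assume ne: "i \<noteq> i0"
    have "j \<in> block ns n i" using that by blast
    then have ji: "S i \<le> j" "j < S (Suc i)" unfolding block_def Ssuc by (simp_all add: S_def)
    show False
    proof (cases "i < i0")
      case True
      then have "S (Suc i) \<le> S i0" by (intro Smono) simp
      then show False using ji i0lo by simp
    next
      case False
      then have "Suc i0 \<le> i" using ne by simp
      then have "S (Suc i0) \<le> S i" by (rule Smono)
      then show False using ji i0 by simp
    qed
  qed
  have "grp k ns n j = i0" unfolding grp_def
    by (rule the_equality) (use mem uniq in blast)+
  then show ?thesis using mem by simp
qed

lemma sample_law_prob:
  assumes P_prob: "\<And>i. i < k \<Longrightarrow> prob_space (P i)"
    and sizes: "\<And>n. (\<Sum>i<k. ns n i) = n"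
  shows "prob_space (sample_law P k ns n)"
  unfolding sample_law_def
  by (rule prob_space_PiM) (use P_prob grp_ok[where ns=ns and n=n and k=k, OF sizes[of n]] in auto)

theorem theorem2:
  fixes k :: nat
    and P :: "nat \<Rightarrow> (real^'d) measure"
    and \<theta> :: "(real^'d) measure \<Rightarrow> real^'e"
    and ns :: "nat \<Rightarrow> nat \<Rightarrow> nat"
    and p :: "nat \<Rightarrow> real"
    and T :: "nat \<Rightarrow> (nat \<Rightarrow> real^'d) \<Rightarrow> real"
    and F :: "nat \<Rightarrow> real \<Rightarrow> (nat \<Rightarrow> (real^'d) pmf) \<Rightarrow> real"
    and HT RT :: "real \<Rightarrow> real"
  assumes P_prob: "\<And>i. i < k \<Longrightarrow> prob_space (P i)"
    and P_borel: "\<And>i. i < k \<Longrightarrow> sets (P i) = sets borel"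
    and null_hyp: "\<And>i. i < k \<Longrightarrow> \<theta> (P i) = \<theta> (P 0)"
    and sizes: "\<And>n. (\<Sum>i<k. ns n i) = n"
    and ratios: "\<And>i. i < k \<Longrightarrow> (\<lambda>n. real (ns n i) / real n) \<longlonglongrightarrow> p i"
    and p_range: "\<And>i. i < k \<Longrightarrow> 0 < p i \<and> p i < 1"
    and T_meas: "\<And>n. T n \<in> borel_measurable (sample_law P k ns n)"
    and F_meas: "\<And>n. (\<lambda>(x, Z). F n x (emp k ns n Z))
                        \<in> borel_measurable (borel \<Otimes>\<^sub>M sample_law P k ns n)"
    and HT_lim: "\<And>x. (\<lambda>n. H_Tn P k ns T n x) \<longlonglongrightarrow> HT x"
    and HT_cdf: "(HT \<longlongrightarrow> 0) at_bot" "(HT \<longlongrightarrow> 1) at_top"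
    and HT_cont: "continuous_on UNIV HT"
    and HT_strict: "strict_mono HT"
    and RT_lim: "\<And>x. conv_prob (sample_law P k ns) (\<lambda>n Z. R_Tn T n Z x) (RT x)"
    and RT_cdf: "(RT \<longlongrightarrow> 0) at_bot" "(RT \<longlongrightarrow> 1) at_top"
    and RT_cont: "continuous_on UNIV RT"
    and RT_strict: "strict_mono RT"
    and F_H: "sup_conv_prob (sample_law P k ns)
                (\<lambda>n Z x. F n x (emp k ns n Z) - H_Tn P k ns T n x)"
    and F_R: "sup_conv_prob (\<lambda>n. sample_law P k ns n \<Otimes>\<^sub>M perm_law n)
                (\<lambda>n (Z, \<pi>) x. F n x (emp k ns n (Z \<circ> \<pi>)) - R_Tn T n Z x)"
  shows "(\<forall>e>0. eventually (\<lambda>n. \<forall>x. \<bar>H_Fn P k ns T F n x - unif_cdf x\<bar> \<le> e) sequentially)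
         \<and> sup_conv_prob (sample_law P k ns) (\<lambda>n Z x. R_Fn k ns T F n Z x - unif_cdf x)"
proof -
  let ?M = "sample_law P k ns"
  have PS: "\<And>n. prob_space (?M n)" by (rule sample_law_prob[OF P_prob sizes])
  have Phi_meas: "{Z \<in> space (?M n). F n (T n Z) (emp k ns n Z) \<le> x} \<in> sets (?M n)" for n x
  proof -
    have "(\<lambda>Z. (T n Z, Z)) \<in> measurable (?M n) (borel \<Otimes>\<^sub>M ?M n)"
      by (intro measurable_Pair T_meas measurable_ident_sets) simp
    from measurable_compose[OF this F_meas[of n]]
    have "(\<lambda>Z. F n (T n Z) (emp k ns n Z)) \<in> borel_measurable (?M n)" by simp
    then show ?thesis by measurable
  qed
  have A: "\<forall>e>0. eventually (\<lambda>n. \<forall>x. \<bar>measure (?M n) {Z \<in> space (?M n). F n (T n Z) (emp k ns n Z) \<le> x} - unif_cdf x\<bar> \<le> e) sequentially"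
    by (rule part1[where M="sample_law P k ns" and T=T and HT=HT and \<Phi>="\<lambda>n y Z. F n y (emp k ns n Z)",
          OF PS T_meas Phi_meas _ HT_cdf HT_cont HT_strict])
       (use HT_lim F_H in \<open>simp_all add: H_Tn_def\<close>)
  have fin: "finite (perms n)" for n
    unfolding perms_def by (rule finite_permutations) simp
  have ne: "perms n \<noteq> {}" for n
    unfolding perms_def using permutes_id[of "{..<n}"] by blast
  have cardp: "card (perms n) = fact n" for n
    unfolding perms_def by (rule card_permutations) simp_all
  have B: "sup_conv_prob ?M (\<lambda>n Z x. R_Fn k ns T F n Z x - unif_cdf x)"
  proof (rule part2[where M="sample_law P k ns" and PP=perms and R="R_Tn T" and RF="R_Fn k ns T F" and RT=RT and
          W="\<lambda>n Z \<pi>. T n (Z \<circ> \<pi>)" and G="\<lambda>n Z \<pi> y. F n y (emp k ns n (Z \<circ> \<pi>))",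
          OF PS fin ne _ _ RT_lim RT_cdf RT_cont RT_strict])
    show "R_Tn T n Z y = real (card {\<pi> \<in> perms n. T n (Z \<circ> \<pi>) \<le> y}) / real (card (perms n))" for n Z y
      unfolding R_Tn_def using fin[of n] cardp[of n] by (simp add: sum_ind_card)
    show "R_Fn k ns T F n Z x = real (card {\<pi> \<in> perms n. F n (T n (Z \<circ> \<pi>)) (emp k ns n (Z \<circ> \<pi>)) \<le> x}) / real (card (perms n))" for n Z x
      unfolding R_Fn_def using fin[of n] cardp[of n] by (simp add: sum_ind_card)
    show "sup_conv_prob (\<lambda>n. ?M n \<Otimes>\<^sub>M measure_pmf (pmf_of_set (perms n)))
           (\<lambda>n (Z, \<pi>) x. F n x (emp k ns n (Z \<circ> \<pi>)) - R_Tn T n Z x)"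
      using F_R by (simp add: perm_law_def)
  qed
  show ?thesis using A B by (simp add: H_Fn_def)
qed

end
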